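(* Let $n\ge2$, let $\mathbf{x}=(x_1,\dots,x_n)^T\in\mathbb{C}^n$ with $x_i\neq x_j$ for all $i\neq j$, and let $F$ and $A^{(k)}(\mathbf{x})$ be as in the context. Then for each $k\in\{1,\dots,n\}$ the matrix $M^{(k)}:=F'(\mathbf{x})^{-1}A^{(k)}(\mathbf{x})$ has entries \[ M^{(k)}_{jl}=\begin{cases} \dfrac{1}{x_k-x_j}, & j=l\neq k,\\[2ex] \dfrac{1}{x_l-x_k}, & j=k,\ l\neq k,\\[2ex] 0, & \text{otherwise (in particular } M^{(k)}_{kk}=0\text{)}. \end{cases} \]
   Context: Let $p(t)=t^n+a_{n-1}t^{n-1}+\dots+a_1t+a_0$ be a monic polynomial of degree $n$ with real coefficients, and set $\mathbf{a}=(a_0,a_1,\dots,a_{n-1})^T$. Define $V=(v_1,\dots,v_n)^T:\mathbb{C}^n\to\mathbb{C}^n$ by \[ v_{n-\nu+1}(\mathbf{x})=\sum_{i_1<i_2<\dots<i_\nu}(-x_{i_1})(-x_{i_2})\cdots(-x_{i_\nu}),\qquad \nu=1,\dots,n, \] (the sum running over all $\nu$-element index sets $\{i_1<\dots<i_\nu\}\subseteq\{1,\dots,n\}$), so that $\prod_{j=1}^n(t-x_j)=t^n+\sum_{j=0}^{n-1}v_{j+1}(\mathbf{x})t^j$. Define $F=(f_1,\dots,f_n)^T:\mathbb{C}^n\to\mathbb{C}^n$ by $F(\mathbf{x})=V(\mathbf{x})-\mathbf{a}$, with Jacobian $F'(\mathbf{x})$ (invertible when the $x_i$ are pairwise distinct).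 For $k=1,\dots,n$, $A^{(k)}(\mathbf{x})\in\mathbb{C}^{n\times n}$ is the matrix whose $(i,l)$ entry is $\partial^2 f_i(\mathbf{x})/\partial x_l\partial x_k$. *)

theory Defs
  imports "HOL-Analysis.Analysis" "Jordan_Normal_Form.Gauss_Jordan_Elimination"
begin

text \<open>Indices are shifted to 0-based: x i for i < n stands for x_(i+1).
  Vcoef n x i (i < n) is the coefficient of t^i in prod_(j<n) (t - x j), i.e. v_(i+1)(x):
  v_(n-nu+1) = sum over nu-element index sets of prod (- x_s), with i = n - nu.\<close>

definition Vcoef :: "nat \<Rightarrow> (nat \<Rightarrow> complex) \<Rightarrow> nat \<Rightarrow> complex" where
  "Vcoef n x i = (\<Sum>S\<in>{S. S \<subseteq> {..<n} \<and> card S = n - i}. \<Prod>s\<in>S. - x s)"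

definition Ffun :: "nat \<Rightarrow> (nat \<Rightarrow> real) \<Rightarrow> (nat \<Rightarrow> complex) \<Rightarrow> nat \<Rightarrow> complex" where
  "Ffun n a x i = Vcoef n x i - complex_of_real (a i)"

definition partial :: "nat \<Rightarrow> ((nat \<Rightarrow> complex) \<Rightarrow> complex) \<Rightarrow> (nat \<Rightarrow> complex) \<Rightarrow> complex" where
  "partial l g x = deriv (\<lambda>t. g (x(l := t))) (x l)"

definition jacF :: "nat \<Rightarrow> (nat \<Rightarrow> real) \<Rightarrow> (nat \<Rightarrow> complex) \<Rightarrow> complex mat" where
  "jacF n a x = mat n n (\<lambda>(i, l). partial l (\<lambda>y. Ffun n a y i) x)"

definition hessA :: "nat \<Rightarrow> (nat \<Rightarrow> real) \<Rightarrow> nat \<Rightarrow> (nat \<Rightarrow> complex) \<Rightarrow> complex mat" where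
  "hessA n a k x = mat n n (\<lambda>(i, l). partial l (\<lambda>y. partial k (\<lambda>z. Ffun n a z i) y) x)"

end

theory Submission
  imports Defs "Jordan_Normal_Form.Determinant"
begin

definition E :: "nat set \<Rightarrow> (nat \<Rightarrow> complex) \<Rightarrow> nat \<Rightarrow> complex" where
  "E T x m = (\<Sum>S\<in>{S. S \<subseteq> T \<and> card S = m}. \<Prod>s\<in>S. - x s)"

lemma Vcoef_E: "Vcoef n x i = E {..<n} x (n - i)"
  by (simp add: Vcoef_def E_def)

lemma E_cong: "(\<And>s. s \<in> T \<Longrightarrow> x s = y s) \<Longrightarrow> E T x m = E T y m"
  unfolding E_def by (rule sum.cong[OF refl], rule prod.cong[OF refl]) auto

lemma E_empty: "E {} x m = (if m = 0 then 1 else 0)"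
proof (cases "m = 0")
  case True
  then have h: "{S. S \<subseteq> {} \<and> card S = m} = {{}}" by auto
  show ?thesis unfolding E_def h using True by simp
next
  case False
  then have h: "{S. S \<subseteq> {} \<and> card S = m} = {}" by auto
  show ?thesis unfolding E_def h using False by simp
qed

lemma E_big: "finite T \<Longrightarrow> card T < m \<Longrightarrow> E T x m = 0"
proof -
  assume "finite T" "card T < m"
  then have h: "{S. S \<subseteq> T \<and> card S = m} = {}"
    using card_mono[OF \<open>finite T\<close>] by (metis (mono_tags, lifting) empty_Collect_eq leD)
  show ?thesis unfolding E_def h by simp
qed

lemma E_insert:
  assumes fin: "finite T" and l: "l \<notin> T"
  shows "E (insert l T) x m = E T x m + (if m = 0 then 0 else (- x l) * E T x (m - 1))"
proof (cases "m = 0")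
  case True
  then have "{S. S \<subseteq> insert l T \<and> card S = m} = {{}}" "{S. S \<subseteq> T \<and> card S = m} = {{}}"
    using fin by (auto intro: finite_subset dest: card_0_eq[THEN iffD1, rotated])
  then show ?thesis using True by (simp add: E_def)
next
  case False
  define A where "A = {S. S \<subseteq> T \<and> card S = m}"
  define B where "B = {S. S \<subseteq> T \<and> card S = m - 1}"
  have eq: "{S. S \<subseteq> insert l T \<and> card S = m} = A \<union> insert l ` B"
  proof -
    have "S \<in> A \<union> insert l ` B" if S: "S \<subseteq> insert l T" "card S = m" for S
    proof (cases "l \<in> S")
      case True
      have "S - {l} \<in> B" using S True fin False unfolding B_def
        by (auto simp: card_Diff_singleton)
      moreover have "S = insert l (S - {l})" using True by auto
      ultimately show ?thesis by blast
    next
      case False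
      then show ?thesis using S unfolding A_def by auto
    qed
    moreover have "S \<subseteq> insert l T \<and> card S = m" if "S \<in> A \<union> insert l ` B" for S
      using that
    proof
      assume "S \<in> A" then show ?thesis unfolding A_def by auto
    next
      assume "S \<in> insert l ` B"
      then obtain R where R: "R \<in> B" "S = insert l R" by auto
      then have "finite R" "l \<notin> R" using fin l unfolding B_def by (auto intro: finite_subset)
      then show ?thesis using R False unfolding B_def by auto
    qed
    ultimately show ?thesis by blast
  qed
  have finA: "finite A" using fin unfolding A_def by auto
  have finB: "finite B" using fin unfolding B_def by auto
  have disj: "A \<inter> insert l ` B = {}" using l unfolding A_def B_def by auto
  have inj: "inj_on (insert l) B"
  proof (rule inj_onI)
    fix u v assume "u \<in> B" "v \<in> B" "insert l u = insert l v"
    then have "l \<notin> u" "l \<notin> v" using l unfolding B_def by auto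
    then show "u = v" using \<open>insert l u = insert l v\<close> by (metis Diff_insert_absorb)
  qed
  have "E (insert l T) x m = (\<Sum>S\<in>A. \<Prod>s\<in>S. - x s) + (\<Sum>S\<in>insert l ` B. \<Prod>s\<in>S. - x s)"
    unfolding E_def eq by (rule sum.union_disjoint[OF finA _ disj]) (use finB in auto)
  also have "(\<Sum>S\<in>insert l ` B. \<Prod>s\<in>S. - x s) = (\<Sum>R\<in>B. \<Prod>s\<in>insert l R. - x s)"
    by (rule sum.reindex[OF inj, unfolded comp_def])
  also have "\<dots> = (\<Sum>R\<in>B. (- x l) * (\<Prod>s\<in>R. - x s))"
  proof (rule sum.cong[OF refl])
    fix R assume "R \<in> B"
    then have "finite R" "l \<notin> R" using fin l unfolding B_def by (auto intro: finite_subset)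
    then show "(\<Prod>s\<in>insert l R. - x s) = (- x l) * (\<Prod>s\<in>R. - x s)" by simp
  qed
  also have "\<dots> = (- x l) * E T x (m - 1)" unfolding E_def B_def by (simp add: sum_distrib_left)
  finally show ?thesis using False unfolding E_def A_def by simp
qed

lemma E_update_out: "l \<notin> T \<Longrightarrow> E T (x(l := t)) m = E T x m"
  by (rule E_cong) auto

lemma E_update_in:
  assumes "finite T" "l \<in> T"
  shows "E T (x(l := t)) m = E (T - {l}) x m + t * (if m = 0 then 0 else - E (T - {l}) x (m - 1))"
proof -
  have T: "T = insert l (T - {l})" using assms by auto
  have "E T (x(l := t)) m = E (insert l (T - {l})) (x(l := t)) m" using T by simp
  also have "\<dots> = E (T - {l}) (x(l := t)) m + (if m = 0 then 0 else (- t) * E (T - {l}) (x(l := t)) (m - 1))"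
    by (subst E_insert) (use assms in auto)
  also have "\<dots> = E (T - {l}) x m + t * (if m = 0 then 0 else - E (T - {l}) x (m - 1))"
    by (simp add: E_update_out)
  finally show ?thesis .
qed

lemma partial_affine:
  assumes "\<And>t. g (x(l := t)) = c + t * d"
  shows "partial l g x = d"
proof -
  have "(\<lambda>t. g (x(l := t))) = (\<lambda>t. c + t * d)" using assms by auto
  moreover have "deriv (\<lambda>t. c + t * d) (x l) = d"
    by (rule DERIV_imp_deriv) (auto intro!: derivative_eq_intros)
  ultimately show ?thesis unfolding partial_def by simp
qed

lemma partial_Ffun:
  assumes "l < n" "i < n"
  shows "partial l (\<lambda>y. Ffun n a y i) y = - E ({..<n} - {l}) y (n - i - 1)"
  by (rule partial_affine[where c = "E ({..<n} - {l}) y (n - i) - complex_of_real (a i)"])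
     (use assms in \<open>simp add: Ffun_def Vcoef_E E_update_in\<close>)

lemma vieta:
  assumes "finite U"
  shows "(\<Prod>s\<in>U. t - x s) = (\<Sum>i\<le>card U. t ^ i * E U x (card U - i))"
  using assms
proof (induction U rule: finite_induct)
  case empty
  then show ?case by (simp add: E_empty)
next
  case (insert a U)
  define N where "N = card U"
  define S where "S = (\<Sum>i\<le>N. t ^ i * E U x (N - i))"
  have c: "card (insert a U) = Suc N" using insert N_def by simp
  have "(\<Sum>i\<le>Suc N. t ^ i * E (insert a U) x (Suc N - i))
     = (\<Sum>i\<le>Suc N. t ^ i * E U x (Suc N - i)) +
       (\<Sum>i\<le>Suc N. t ^ i * (if Suc N - i = 0 then 0 else - x a * E U x (Suc N - i - 1)))"
    by (simp add: E_insert insert distrib_left sum.distrib)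
  also have "(\<Sum>i\<le>Suc N. t ^ i * E U x (Suc N - i)) = t * S"
    unfolding S_def sum.atMost_Suc_shift using insert N_def
    by (simp add: E_big sum_distrib_left mult.assoc)
  also have "(\<Sum>i\<le>Suc N. t ^ i * (if Suc N - i = 0 then 0 else - x a * E U x (Suc N - i - 1)))
     = - x a * S"
    unfolding S_def sum.atMost_Suc sum_distrib_left
    by (auto intro!: sum.cong simp: Suc_diff_le)
  finally show ?case unfolding c using insert S_def N_def by (simp add: algebra_simps)
qed

lemma hess_entry:
  assumes "k < n" "l < n" "i < n"
  shows "partial l (\<lambda>y. partial k (\<lambda>z. Ffun n a z i) y) x =
    (if l = k then 0 else if n - i - 1 = 0 then 0 else E ({..<n} - {k} - {l}) x (n - i - 2))"
proof -
  have inner: "(\<lambda>y. partial k (\<lambda>z. Ffun n a z i) y) = (\<lambda>y. - E ({..<n} - {k}) y (n - i - 1))"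
    using assms by (simp add: partial_Ffun)
  show ?thesis
  proof (cases "l = k")
    case True
    then show ?thesis unfolding inner
      by (intro partial_affine[where c = "- E ({..<n} - {k}) x (n - i - 1)"]) (simp add: E_update_out)
  next
    case False
    then have "l \<in> {..<n} - {k}" using assms by auto
    then show ?thesis unfolding inner using False
      by (intro partial_affine[where c = "- E ({..<n} - {k} - {l}) x (n - i - 1)"])
         (auto simp: E_update_in diff_diff_eq)
  qed
qed

lemma key_identity:
  assumes "k < n" "l < n" "k \<noteq> l" "x k \<noteq> x l"
  shows "- E ({..<n} - {l}) x p / (x k - x l) + - E ({..<n} - {k}) x p / (x l - x k)
    = (if p = 0 then 0 else E ({..<n} - {k} - {l}) x (p - 1))"
proof -
  define U where "U = {..<n} - {k} - {l}"
  have U1: "{..<n} - {l} = insert k U" "k \<notin> U" using assms unfolding U_def by auto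
  have U2: "{..<n} - {k} = insert l U" "l \<notin> U" using assms unfolding U_def by auto
  have fU: "finite U" unfolding U_def by auto
  have d: "x k - x l \<noteq> 0" "x l - x k \<noteq> 0" using assms by auto
  have r: "E ({..<n} - {k} - {l}) x (p - 1) = E U x (p - 1)" unfolding U_def ..
  have neg: "x l - x k = - (x k - x l)" by simp
  have alg: "- (A + (- x k) * C) / (x k - x l) + - (A + (- x l) * C) / (x l - x k) = C" for A C
  proof -
    have "- (A + (- x k) * C) / (x k - x l) + - (A + (- x l) * C) / (x l - x k)
        = (- (A + (- x k) * C) + (A + (- x l) * C)) / (x k - x l)"
      by (subst neg) (simp add: add_divide_distrib[symmetric] diff_divide_distrib[symmetric] divide_minus_right algebra_simps del: minus_diff_eq)
    also have "\<dots> = C * (x k - x l) / (x k - x l)" by (simp add: algebra_simps)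
    also have "\<dots> = C" using d(1) by simp
    finally show ?thesis .
  qed
  show ?thesis
  proof (cases "p = 0")
    case True
    show ?thesis unfolding r unfolding U1(1) U2(1) E_insert[OF fU U1(2)] E_insert[OF fU U2(2)]
      using alg[of "E U x p" 0] True by simp
  next
    case False
    show ?thesis unfolding r unfolding U1(1) U2(1) E_insert[OF fU U1(2)] E_insert[OF fU U2(2)]
      using alg[of "E U x p" "E U x (p - 1)"] False by simp
  qed
qed

theorem mainTheorem5:
  fixes n :: nat and a :: "nat \<Rightarrow> real" and x :: "nat \<Rightarrow> complex"
  assumes "n \<ge> 2"
    and "\<forall>i<n. \<forall>j<n. i \<noteq> j \<longrightarrow> x i \<noteq> x j"
  shows "\<exists>Jinv. mat_inverse (jacF n a x) = Some Jinv \<and>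
    (\<forall>k<n. \<forall>j<n. \<forall>l<n.
       (Jinv * hessA n a k x) $$ (j, l) =
         (if j = l \<and> l \<noteq> k then 1 / (x k - x j)
          else if j = k \<and> l \<noteq> k then 1 / (x l - x k)
          else 0))"
proof -
  define T where "T = {..<n}"
  define J where "J = mat n n (\<lambda>(i, l). - E (T - {l}) x (n - i - 1))"
  define Ak where "Ak k = mat n n (\<lambda>(i, l). if l = k then 0 else if n - i - 1 = 0 then 0
      else E (T - {k} - {l}) x (n - i - 2))" for k
  define M where "M k = mat n n (\<lambda>(j, l). if j = l \<and> l \<noteq> k then 1 / (x k - x j)
          else if j = k \<and> l \<noteq> k then 1 / (x l - x k) else 0)" for k
  define Pr where "Pr j = (\<Prod>s\<in>T - {j}. x j - x s)" for j
  define Bm where "Bm = mat n n (\<lambda>(j, i). - ((x j) ^ i) / Pr j)"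
  have fT: "finite T" unfolding T_def by auto
  have JC: "J \<in> carrier_mat n n" and BmC: "Bm \<in> carrier_mat n n" unfolding J_def Bm_def by auto
  have jac: "jacF n a x = J"
    unfolding jacF_def J_def T_def by (rule eq_matI) (auto simp: partial_Ffun)
  have hess: "hessA n a k x = Ak k" if "k < n" for k
    unfolding hessA_def Ak_def T_def by (rule eq_matI) (use that in \<open>auto simp: hess_entry\<close>)
  have Pnz: "Pr j \<noteq> 0" if "j < n" for j
    unfolding Pr_def using assms(2) that fT by (auto simp: T_def)
  have BJ: "Bm * J = 1\<^sub>m n"
  proof (rule eq_matI)
    fix j l assume jl: "j < dim_row (one_mat n :: complex mat)" "l < dim_col (one_mat n :: complex mat)"
    then have j: "j < n" and l: "l < n" by auto
    have cardT: "card (T - {l}) = n - 1" using l fT by (simp add: T_def)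
    have "(Bm * J) $$ (j, l) = (\<Sum>i<n. (x j) ^ i / Pr j * E (T - {l}) x (n - i - 1))"
      using j l unfolding Bm_def J_def by (simp add: scalar_prod_def lessThan_atLeast0)
    also have "\<dots> = (\<Sum>i\<le>n - 1. (x j) ^ i * E (T - {l}) x (n - 1 - i)) / Pr j"
    proof -
      have "{..<n} = {..n - 1}" using assms(1) by auto
      then show ?thesis by (simp add: sum_divide_distrib diff_diff_eq)
    qed
    also have "\<dots> = (\<Prod>s\<in>T - {l}. x j - x s) / Pr j"
      using vieta[of "T - {l}" "x j" x] fT cardT by simp
    also have "\<dots> = (if j = l then 1 else 0)"
    proof (cases "j = l")
      case True then show ?thesis using Pnz j unfolding Pr_def by simp
    next
      case False
      then have "j \<in> T - {l}" using j by (auto simp: T_def)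
      then have "(\<Prod>s\<in>T - {l}. x j - x s) = 0" using fT by (intro prod_zero) auto
      then show ?thesis using False by simp
    qed
    finally show "(Bm * J) $$ (j, l) = 1\<^sub>m n $$ (j, l)" using j l by simp
  qed (auto simp: Bm_def J_def)
  have JB: "J * Bm = 1\<^sub>m n" by (rule mat_mult_left_right_inverse[OF BmC JC BJ])
  have U: "J \<in> Units (ring_mat TYPE(complex) n undefined)"
    using JC BmC JB BJ unfolding Units_def ring_mat_def by auto
  obtain Jinv where Ji: "mat_inverse J = Some Jinv"
    using mat_inverse(1)[OF JC, of undefined] U by (cases "mat_inverse J") auto
  from mat_inverse(2)[OF JC Ji] have JiJ: "Jinv * J = 1\<^sub>m n" and JiC: "Jinv \<in> carrier_mat n n"
    by auto
  have JM: "J * M k = Ak k" if k: "k < n" for k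
  proof (rule eq_matI)
    fix i l assume "i < dim_row (Ak k)" "l < dim_col (Ak k)"
    then have i: "i < n" and l: "l < n" unfolding Ak_def by auto
    show "(J * M k) $$ (i, l) = Ak k $$ (i, l)"
    proof (cases "l = k")
      case True
      then show ?thesis using i l unfolding J_def M_def Ak_def by (simp add: scalar_prod_def)
    next
      case False
      have "(J * M k) $$ (i, l) = (\<Sum>j<n. J $$ (i, j) * M k $$ (j, l))"
        using i l unfolding J_def M_def by (simp add: scalar_prod_def lessThan_atLeast0)
      also have "\<dots> = (\<Sum>j<n. (if j = l then J $$ (i, l) / (x k - x l) else 0) +
                         (if j = k then J $$ (i, k) / (x l - x k) else 0))"
        by (rule sum.cong) (use False l k in \<open>auto simp: M_def\<close>)
      also have "\<dots> = J $$ (i, l) / (x k - x l) + J $$ (i, k) / (x l - x k)"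
        using l k by (simp add: sum.distrib)
      also have "\<dots> = - E (T - {l}) x (n - i - 1) / (x k - x l) + - E (T - {k}) x (n - i - 1) / (x l - x k)"
        using i l k unfolding J_def by simp
      also have "\<dots> = Ak k $$ (i, l)"
        unfolding T_def using key_identity[of k n l x "n - i - 1"] False assms(2) i k l
        by (simp add: Ak_def T_def diff_diff_eq)
      finally show ?thesis .
    qed
  qed (auto simp: M_def Ak_def J_def)
  have res: "Jinv * hessA n a k x = M k" if k: "k < n" for k
  proof -
    have MC: "M k \<in> carrier_mat n n" unfolding M_def by auto
    have "Jinv * hessA n a k x = Jinv * (J * M k)" using hess[OF k] JM[OF k] by simp
    also have "\<dots> = (Jinv * J) * M k" using JiC JC MC by (simp add: assoc_mult_mat)
    also have "\<dots> = M k" using JiJ MC by simp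
    finally show ?thesis .
  qed
  show ?thesis
  proof (intro exI conjI allI impI)
    show "mat_inverse (jacF n a x) = Some Jinv" using Ji jac by simp
    fix k j l assume kjl: "k < n" "j < n" "l < n"
    have "(Jinv * hessA n a k x) $$ (j, l) = M k $$ (j, l)" using res[OF kjl(1)] by simp
    also have "\<dots> = (if j = l \<and> l \<noteq> k then 1 / (x k - x j)
          else if j = k \<and> l \<noteq> k then 1 / (x l - x k) else 0)"
      unfolding M_def using kjl(2,3) by (simp only: index_mat split_conv)
    finally show "(Jinv * hessA n a k x) $$ (j, l) = (if j = l \<and> l \<noteq> k then 1 / (x k - x j)
          else if j = k \<and> l \<noteq> k then 1 / (x l - x k) else 0)" .
  qed
qed

end
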